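(* Let $\Gamma$ be a Deza graph with parameters $(n,k,k-1,a)$, $k>1$, $\beta=1$. Let $x$ be an $A$-vertex and $y$ an $NA$-vertex of $\Gamma$. Then either all possible edges between $\{x,x_b\}$ and $\{y,y_b\}$ are present, or there are no such edges.
   Context: A Deza graph with parameters $(n,k,b,a)$, $a\le b$, is a $k$-regular graph on $n$ vertices in which any two distinct vertices have $a$ or $b$ common neighbours; $\beta$ is the number of vertices $u\ne v$ with exactly $b$ common neighbours with a given vertex $v$ (independent of $v$). Since $\beta=1$, for each vertex $x$ let $x_b$ denote the unique vertex having $b=k-1$ common neighbours with $x$. A vertex $x$ is an $A$-vertex if $x$ is adjacent to $x_b$, and an $NA$-vertex otherwise. *)

theory Defs
  imports Main
begin

definition simple_graph :: "'a set \<Rightarrow> ('a \<Rightarrow> 'a \<Rightarrow> bool) \<Rightarrow> bool" where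
  "simple_graph V E \<longleftrightarrow> finite V \<and> (\<forall>u v. E u v \<longrightarrow> u \<in> V \<and> v \<in> V)
     \<and> (\<forall>u v. E u v \<longrightarrow> E v u) \<and> (\<forall>u. \<not> E u u)"

definition common_nbrs :: "'a set \<Rightarrow> ('a \<Rightarrow> 'a \<Rightarrow> bool) \<Rightarrow> 'a \<Rightarrow> 'a \<Rightarrow> nat" where
  "common_nbrs V E u v = card {w \<in> V. E u w \<and> E v w}"

definition deza_graph :: "'a set \<Rightarrow> ('a \<Rightarrow> 'a \<Rightarrow> bool) \<Rightarrow> nat \<Rightarrow> nat \<Rightarrow> nat \<Rightarrow> nat \<Rightarrow> bool" where
  "deza_graph V E n k b a \<longleftrightarrow> simple_graph V E \<and> card V = n \<and> a \<le> b
     \<and> (\<forall>v\<in>V. card {u \<in> V. E v u} = k)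
     \<and> (\<forall>u\<in>V. \<forall>v\<in>V. u \<noteq> v \<longrightarrow> common_nbrs V E u v = a \<or> common_nbrs V E u v = b)"

definition beta_at :: "'a set \<Rightarrow> ('a \<Rightarrow> 'a \<Rightarrow> bool) \<Rightarrow> nat \<Rightarrow> 'a \<Rightarrow> nat" where
  "beta_at V E b v = card {u \<in> V. u \<noteq> v \<and> common_nbrs V E u v = b}"

text \<open>When beta = 1: the unique vertex x_b having b common neighbours with x.\<close>
definition b_partner :: "'a set \<Rightarrow> ('a \<Rightarrow> 'a \<Rightarrow> bool) \<Rightarrow> nat \<Rightarrow> 'a \<Rightarrow> 'a" where
  "b_partner V E b x = (THE u. u \<in> V \<and> u \<noteq> x \<and> common_nbrs V E u x = b)"

definition A_vertex :: "'a set \<Rightarrow> ('a \<Rightarrow> 'a \<Rightarrow> bool) \<Rightarrow> nat \<Rightarrow> 'a \<Rightarrow> bool" where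
  "A_vertex V E b x \<longleftrightarrow> x \<in> V \<and> E x (b_partner V E b x)"

definition NA_vertex :: "'a set \<Rightarrow> ('a \<Rightarrow> 'a \<Rightarrow> bool) \<Rightarrow> nat \<Rightarrow> 'a \<Rightarrow> bool" where
  "NA_vertex V E b x \<longleftrightarrow> x \<in> V \<and> \<not> E x (b_partner V E b x)"

end

theory Submission
  imports Defs
begin

lemma common_sym: "common_nbrs V E u v = common_nbrs V E v u"
  unfolding common_nbrs_def by (metis (no_types, lifting) Collect_cong)

theorem lemma4:
  fixes V :: "'a set" and E :: "'a \<Rightarrow> 'a \<Rightarrow> bool" and n k a :: nat and x y :: 'a
  assumes "deza_graph V E n k (k - 1) a"
    and "k > 1"
    and "\<forall>v\<in>V. beta_at V E (k - 1) v = 1"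
    and "A_vertex V E (k - 1) x"
    and "NA_vertex V E (k - 1) y"
  shows "(\<forall>u\<in>{x, b_partner V E (k - 1) x}. \<forall>w\<in>{y, b_partner V E (k - 1) y}. E u w)
       \<or> (\<forall>u\<in>{x, b_partner V E (k - 1) x}. \<forall>w\<in>{y, b_partner V E (k - 1) y}. \<not> E u w)"
proof -
  define P where "P = b_partner V E (k - 1)"
  have sg: "simple_graph V E" and reg: "\<forall>v\<in>V. card {u \<in> V. E v u} = k"
    using assms(1) unfolding deza_graph_def by auto
  have fin: "finite V" and inV: "\<And>u v. E u v \<Longrightarrow> u \<in> V \<and> v \<in> V"
    and sym: "\<And>u v. E u v \<Longrightarrow> E v u" and irr: "\<And>u. \<not> E u u"
    using sg unfolding simple_graph_def by auto
  have part: "P v \<in> V \<and> P v \<noteq> v \<and> common_nbrs V E (P v) v = k - 1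
     \<and> (\<forall>u. u \<in> V \<and> u \<noteq> v \<and> common_nbrs V E u v = k - 1 \<longrightarrow> u = P v)" if "v \<in> V" for v
  proof -
    have "card {u \<in> V. u \<noteq> v \<and> common_nbrs V E u v = k - 1} = 1"
      using assms(3) that unfolding beta_at_def by auto
    then obtain w where w: "{u \<in> V. u \<noteq> v \<and> common_nbrs V E u v = k - 1} = {w}"
      by (meson card_1_singletonE)
    have "P v = w" unfolding P_def b_partner_def
    proof (rule the_equality)
      show "w \<in> V \<and> w \<noteq> v \<and> common_nbrs V E w v = k - 1" using w by blast
    next
      fix u assume "u \<in> V \<and> u \<noteq> v \<and> common_nbrs V E u v = k - 1"
      then show "u = w" using w by blast
    qed
    then show ?thesis using w by blast
  qed
  have PP: "P (P v) = v" if "v \<in> V" for v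
  proof -
    have "common_nbrs V E v (P v) = k - 1" using part[OF that] common_sym by metis
    then show ?thesis using part[OF that] part[of "P v"] that by metis
  qed
  have diff: "z = z'" if "u \<in> V" "common_nbrs V E u v = k - 1"
     "E u z" "E u z'" "\<not> E v z" "\<not> E v z'" for u v z z'
  proof -
    let ?N = "{w \<in> V. E u w}" let ?C = "{w \<in> V. E u w \<and> E v w}"
    have f: "finite ?N" using fin by auto
    have "card ?N = k" using reg that(1) by auto
    moreover have "card ?C = k - 1" using that(2) unfolding common_nbrs_def .
    moreover have "?C \<subseteq> ?N" by auto
    ultimately have "card (?N - ?C) = 1" using f card_Diff_subset[of ?C ?N] assms(2)
      by (simp add: finite_subset)
    then obtain q where q: "?N - ?C = {q}" by (meson card_1_singletonE)
    have "z \<in> ?N - ?C" "z' \<in> ?N - ?C" using that inV by auto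
    then show ?thesis using q by (metis singletonD)
  qed
  have xV: "x \<in> V" and xA: "E x (P x)" using assms(4) unfolding A_vertex_def P_def by auto
  have yV: "y \<in> V" and yN: "\<not> E y (P y)" using assms(5) unfolding NA_vertex_def P_def by auto
  have px: "P x \<in> V" "P x \<noteq> x" "common_nbrs V E (P x) x = k - 1" using part[OF xV] by auto
  have py: "P y \<in> V" "P y \<noteq> y" "common_nbrs V E (P y) y = k - 1" using part[OF yV] by auto
  have cx: "common_nbrs V E x (P x) = k - 1" using px common_sym by metis
  have cy: "common_nbrs V E y (P y) = k - 1" using py common_sym by metis
  have closed: "E x w \<longleftrightarrow> E (P x) w" if "w \<noteq> x" "w \<noteq> P x" for w
  proof
    assume h: "E x w" show "E (P x) w"
    proof (rule ccontr)
      assume "\<not> E (P x) w"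
      then have "w = P x" using diff[OF xV cx h xA] irr by blast
      then show False using that by simp
    qed
  next
    assume h: "E (P x) w" show "E x w"
    proof (rule ccontr)
      assume "\<not> E x w"
      then have "w = x" using diff[OF px(1) px(3) h sym[OF xA]] irr by blast
      then show False using that by simp
    qed
  qed
  have y1: "y \<noteq> x" using xA yN by auto
  have y2: "y \<noteq> P x" using PP[OF xV] xA yN sym by metis
  have y3: "P y \<noteq> x" using PP[OF yV] PP[OF xV] xA yN sym by metis
  have y4: "P y \<noteq> P x" using PP[OF yV] PP[OF xV] y1 by metis
  have e1: "E x y \<longleftrightarrow> E (P x) y" using closed y1 y2 by blast
  have e2: "E x (P y) \<longleftrightarrow> E (P x) (P y)" using closed y3 y4 by blast
  have e3: "E x y \<longleftrightarrow> E x (P y)"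
  proof
    assume h: "E x y" show "E x (P y)"
    proof (rule ccontr)
      assume n: "\<not> E x (P y)"
      have "x = P x" using diff[OF yV cy sym[OF h] sym] e1 e2 h n sym by blast
      then show False using px by simp
    qed
  next
    assume h: "E x (P y)" show "E x y"
    proof (rule ccontr)
      assume n: "\<not> E x y"
      have "x = P x" using diff[OF py(1) py(3) sym[OF h] sym] e1 e2 h n sym by blast
      then show False using px by simp
    qed
  qed
  show ?thesis unfolding P_def[symmetric] using e1 e2 e3 sym by blast
qed

end
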